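(* There exists an absolute constant $C_2>0$ such that for every $\delta_0>0$ the following holds: if $\|\mathcal T-\mathcal S\|_{\mathrm{op}}<\delta_0$ and $x\in\mathbb C^n$ satisfies $$8\frac{|\langle x,x^\natural\rangle|^2}{\|x^\natural\|^4}+\Big(4+\tfrac14\delta_0C_2\Big)\frac{\|x\|^2}{\|x^\natural\|^2}\le 4-\tfrac14\delta_0C_2,$$ then $(x^{\natural+})^TH_f(x^+)\,x^{\natural+}<0$, where $H_f$ is the Hessian of $f$ with respect to $x^+$.
   Context: Let $n,m\ge 1$, $a_1,\dots,a_m\in\mathbb C^n$ and $x^\natural\in\mathbb C^n$ with $x^\natural\neq0$. For $a,b\in\mathbb C^n$ write $\langle a,b\rangle=\sum_{j}a_j\overline{b_j}$ and let $\|\cdot\|$ be the Euclidean norm. Let $y_i=|\langle a_i,x^\natural\rangle|^2$. For $v\in\mathbb C^n$ put $v^+=(\mathrm{Re}\,v,\mathrm{Im}\,v)\in\mathbb R^{2n}$ and $v^-=(-\mathrm{Im}\,v,\mathrm{Re}\,v)$; $x$ and $x^+$ always correspond. Define $f:\mathbb R^{2n}\to\mathbb R$ by $f(x^+)=\sum_{i=1}^m\big(|\langle a_i,x\rangle|^2-y_i\big)^2$. Fix $\sigma>0$ (in the paper, $\sigma^2=\mathrm{Var}((a_i^+)_1)$ for random measurement vectors), set $c=m\sigma^4$. Define the order-4 tensors on $\mathbb R^{2n}$: $\mathcal T=\frac1c\sum_{i=1}^m(a_i^+)^{\otimes 4}$ and $\mathcal S_{i_1i_2i_3i_4}=\mathbf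 1_{i_1=i_2,\,i_3=i_4}+\mathbf 1_{i_1=i_3,\,i_2=i_4}+\mathbf 1_{i_1=i_4,\,i_2=i_3}$, and $\|\mathcal R\|_{\mathrm{op}}=\sup\{\langle \mathcal R,u_1\otimes u_2\otimes u_3\otimes u_4\rangle:\ u_j\in\mathbb R^{2n},\ \|u_1\|\|u_2\|\|u_3\|\|u_4\|=1\}$ (tensor inner product = sum of entrywise products). *)

theory Defs
  imports "HOL-Analysis.Analysis"
begin

text \<open>Vectors in C^n are represented as functions nat => complex, only the
entries with index < n are relevant. Vectors in R^(2n) are functions nat => real
with relevant indices < 2n.\<close>

definition cinner :: "nat \<Rightarrow> (nat \<Rightarrow> complex) \<Rightarrow> (nat \<Rightarrow> complex) \<Rightarrow> complex" where
  "cinner n a b = (\<Sum>j<n. a j * cnj (b j))"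

definition cnorm :: "nat \<Rightarrow> (nat \<Rightarrow> complex) \<Rightarrow> real" where
  "cnorm n v = sqrt (\<Sum>j<n. (cmod (v j))\<^sup>2)"

definition rnorm :: "nat \<Rightarrow> (nat \<Rightarrow> real) \<Rightarrow> real" where
  "rnorm d u = sqrt (\<Sum>j<d. (u j)\<^sup>2)"

definition plusv :: "nat \<Rightarrow> (nat \<Rightarrow> complex) \<Rightarrow> nat \<Rightarrow> real" where
  "plusv n v k = (if k < n then Re (v k) else if k < 2*n then Im (v (k - n)) else 0)"

definition ofplus :: "nat \<Rightarrow> (nat \<Rightarrow> real) \<Rightarrow> nat \<Rightarrow> complex" where
  "ofplus n p j = Complex (p j) (p (n + j))"

definition floss :: "nat \<Rightarrow> nat \<Rightarrow> (nat \<Rightarrow> nat \<Rightarrow> complex) \<Rightarrow> (nat \<Rightarrow> complex)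
     \<Rightarrow> (nat \<Rightarrow> real) \<Rightarrow> real" where
  "floss n m a xnat p = (\<Sum>i<m. ((cmod (cinner n (a i) (ofplus n p)))\<^sup>2
                                   - (cmod (cinner n (a i) xnat))\<^sup>2)\<^sup>2)"

definition partial :: "nat \<Rightarrow> ((nat \<Rightarrow> real) \<Rightarrow> real) \<Rightarrow> (nat \<Rightarrow> real) \<Rightarrow> real" where
  "partial j g p = deriv (\<lambda>t. g (p(j := p j + t))) 0"

definition hessian :: "((nat \<Rightarrow> real) \<Rightarrow> real) \<Rightarrow> (nat \<Rightarrow> real) \<Rightarrow> nat \<Rightarrow> nat \<Rightarrow> real" where
  "hessian g p j k = partial j (partial k g) p"

definition hess_form :: "nat \<Rightarrow> ((nat \<Rightarrow> real) \<Rightarrow> real) \<Rightarrow> (nat \<Rightarrow> real) \<Rightarrow> (nat \<Rightarrow> real) \<Rightarrow> real" where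
  "hess_form d g p v = (\<Sum>j<d. \<Sum>k<d. v j * hessian g p j k * v k)"

type_synonym tensor4 = "nat \<Rightarrow> nat \<Rightarrow> nat \<Rightarrow> nat \<Rightarrow> real"

definition tensorT :: "nat \<Rightarrow> nat \<Rightarrow> (nat \<Rightarrow> nat \<Rightarrow> complex) \<Rightarrow> real \<Rightarrow> tensor4" where
  "tensorT n m a \<sigma> i1 i2 i3 i4 = (1 / (real m * \<sigma> ^ 4)) *
     (\<Sum>i<m. plusv n (a i) i1 * plusv n (a i) i2 * plusv n (a i) i3 * plusv n (a i) i4)"

definition tensorS :: tensor4 where
  "tensorS i1 i2 i3 i4 =
     (if i1 = i2 \<and> i3 = i4 then 1 else 0) + (if i1 = i3 \<and> i2 = i4 then 1 else 0)
   + (if i1 = i4 \<and> i2 = i3 then 1 else 0)"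

definition tpair :: "nat \<Rightarrow> tensor4 \<Rightarrow> (nat \<Rightarrow> real) \<Rightarrow> (nat \<Rightarrow> real) \<Rightarrow> (nat \<Rightarrow> real)
     \<Rightarrow> (nat \<Rightarrow> real) \<Rightarrow> real" where
  "tpair d R u1 u2 u3 u4 = (\<Sum>i1<d. \<Sum>i2<d. \<Sum>i3<d. \<Sum>i4<d.
       R i1 i2 i3 i4 * u1 i1 * u2 i2 * u3 i3 * u4 i4)"

definition opnorm :: "nat \<Rightarrow> tensor4 \<Rightarrow> real" where
  "opnorm d R = Sup {tpair d R u1 u2 u3 u4 | u1 u2 u3 u4.
       rnorm d u1 * rnorm d u2 * rnorm d u3 * rnorm d u4 = 1}"

end

theory Submission
  imports Defs
begin


definition dotr :: "nat \<Rightarrow> (nat\<Rightarrow>real) \<Rightarrow> (nat\<Rightarrow>real) \<Rightarrow> real" where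
  "dotr d u w = (\<Sum>j<d. u j * w j)"

lemma dotr_upd: "k < d \<Longrightarrow> dotr d l (p(k := p k + t)) = dotr d l p + t * l k"
proof -
  assume k: "k < d"
  have "dotr d l (p(k := p k + t)) = (\<Sum>j<d. l j * p j + (if j = k then t * l k else 0))"
    unfolding dotr_def by (rule sum.cong) (auto simp: algebra_simps)
  also have "\<dots> = dotr d l p + t * l k" using k by (simp add: sum.distrib dotr_def)
  finally show ?thesis .
qed

lemma part_generic:
  assumes g: "\<And>p. g p = (\<Sum>i<m. ((dotr d (l i) p)\<^sup>2 + (dotr d (\<kappa> i) p)\<^sup>2 - y i)\<^sup>2)"
    and k: "k < d"
  shows "partial k g q = (\<Sum>i<m. 4 * ((dotr d (l i) q)\<^sup>2 + (dotr d (\<kappa> i) q)\<^sup>2 - y i)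
            * (dotr d (l i) q * l i k + dotr d (\<kappa> i) q * \<kappa> i k))"
proof -
  have e: "(\<lambda>t. g (q(k := q k + t))) = (\<lambda>t. \<Sum>i<m. ((dotr d (l i) q + t * l i k)\<^sup>2 + (dotr d (\<kappa> i) q + t * \<kappa> i k)\<^sup>2 - y i)\<^sup>2)"
    using k by (simp add: g dotr_upd)
  have "((\<lambda>t. \<Sum>i<m. ((dotr d (l i) q + t * l i k)\<^sup>2 + (dotr d (\<kappa> i) q + t * \<kappa> i k)\<^sup>2 - y i)\<^sup>2) has_real_derivative
     (\<Sum>i<m. 4 * ((dotr d (l i) q)\<^sup>2 + (dotr d (\<kappa> i) q)\<^sup>2 - y i)
            * (dotr d (l i) q * l i k + dotr d (\<kappa> i) q * \<kappa> i k))) (at 0)"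
    by (rule derivative_eq_intros refl | simp add: algebra_simps power2_eq_square)+
  then show ?thesis unfolding partial_def e by (rule DERIV_imp_deriv)
qed

lemma hessian_generic:
  assumes g: "\<And>p. g p = (\<Sum>i<m. ((dotr d (l i) p)\<^sup>2 + (dotr d (\<kappa> i) p)\<^sup>2 - y i)\<^sup>2)"
    and j: "j < d" and k: "k < d"
  shows "hessian g p j k = (\<Sum>i<m. 8 * (dotr d (l i) p * l i j + dotr d (\<kappa> i) p * \<kappa> i j)
            * (dotr d (l i) p * l i k + dotr d (\<kappa> i) p * \<kappa> i k)
         + 4 * ((dotr d (l i) p)\<^sup>2 + (dotr d (\<kappa> i) p)\<^sup>2 - y i) * (l i j * l i k + \<kappa> i j * \<kappa> i k))"
proof -
  have e: "(\<lambda>s. partial k g (p(j := p j + s))) = (\<lambda>s. \<Sum>i<m. 4 * ((dotr d (l i) p + s * l i j)\<^sup>2 + (dotr d (\<kappa> i) p + s * \<kappa> i j)\<^sup>2 - y i)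
            * ((dotr d (l i) p + s * l i j) * l i k + (dotr d (\<kappa> i) p + s * \<kappa> i j) * \<kappa> i k))"
    using j by (simp add: part_generic[OF g k] dotr_upd)
  have "((\<lambda>s. \<Sum>i<m. 4 * ((dotr d (l i) p + s * l i j)\<^sup>2 + (dotr d (\<kappa> i) p + s * \<kappa> i j)\<^sup>2 - y i)
            * ((dotr d (l i) p + s * l i j) * l i k + (dotr d (\<kappa> i) p + s * \<kappa> i j) * \<kappa> i k)) has_real_derivative
     (\<Sum>i<m. 8 * (dotr d (l i) p * l i j + dotr d (\<kappa> i) p * \<kappa> i j)
            * (dotr d (l i) p * l i k + dotr d (\<kappa> i) p * \<kappa> i k)
         + 4 * ((dotr d (l i) p)\<^sup>2 + (dotr d (\<kappa> i) p)\<^sup>2 - y i) * (l i j * l i k + \<kappa> i j * \<kappa> i k))) (at 0)"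
    by (rule derivative_eq_intros refl | simp add: algebra_simps power2_eq_square)+
  then show ?thesis unfolding hessian_def partial_def[of j] e by (rule DERIV_imp_deriv)
qed

lemma sum_sq_form: fixes v f :: "nat \<Rightarrow> real" shows "(\<Sum>j<d. \<Sum>k<d. v j * (f j * f k) * v k) = (\<Sum>j<d. v j * f j)\<^sup>2"
proof -
  have "(\<Sum>j<d. v j * f j)\<^sup>2 = (\<Sum>j<d. v j * f j) * (\<Sum>k<d. v k * f k)"
    by (simp add: power2_eq_square)
  also have "\<dots> = (\<Sum>j<d. \<Sum>k<d. (v j * f j) * (v k * f k))" by (rule sum_product)
  finally show ?thesis by (simp add: algebra_simps)
qed

lemma hess_form_generic:
  assumes g: "\<And>p. g p = (\<Sum>i<m. ((dotr d (l i) p)\<^sup>2 + (dotr d (\<kappa> i) p)\<^sup>2 - y i)\<^sup>2)"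
  shows "hess_form d g p v = (\<Sum>i<m. 8 * (dotr d (l i) p * dotr d (l i) v + dotr d (\<kappa> i) p * dotr d (\<kappa> i) v)\<^sup>2
     + 4 * ((dotr d (l i) p)\<^sup>2 + (dotr d (\<kappa> i) p)\<^sup>2 - y i) * ((dotr d (l i) v)\<^sup>2 + (dotr d (\<kappa> i) v)\<^sup>2))" (is "_ = ?rhs")
proof -
  define L where "L i = dotr d (l i) p" for i
  define K where "K i = dotr d (\<kappa> i) p" for i
  define A where "A i = (L i)\<^sup>2 + (K i)\<^sup>2 - y i" for i
  have "hess_form d g p v = (\<Sum>j<d. \<Sum>k<d. \<Sum>i<m. 
        8 * (v j * (L i * l i j + K i * \<kappa> i j) * ((L i * l i k + K i * \<kappa> i k) * v k))
      + 4 * A i * (v j * (l i j * l i k) * v k) + 4 * A i * (v j * (\<kappa> i j * \<kappa> i k) * v k))"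
    unfolding hess_form_def
    by (intro sum.cong refl) (simp add: hessian_generic[OF g] sum_distrib_left sum_distrib_right L_def K_def A_def algebra_simps)
  also have "\<dots> = (\<Sum>i<m. 8 * (\<Sum>j<d. \<Sum>k<d. v j * ((L i * l i j + K i * \<kappa> i j) * (L i * l i k + K i * \<kappa> i k)) * v k)
      + 4 * A i * (\<Sum>j<d. \<Sum>k<d. v j * (l i j * l i k) * v k) + 4 * A i * (\<Sum>j<d. \<Sum>k<d. v j * (\<kappa> i j * \<kappa> i k) * v k))"
    by (simp add: sum.distrib sum_distrib_left sum.swap[of _ "{..<m}"] algebra_simps)
  also have "\<dots> = (\<Sum>i<m. 8 * (\<Sum>j<d. v j * (L i * l i j + K i * \<kappa> i j))\<^sup>2
      + 4 * A i * (\<Sum>j<d. v j * l i j)\<^sup>2 + 4 * A i * (\<Sum>j<d. v j * \<kappa> i j)\<^sup>2)"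
    by (simp only: sum_sq_form)
  also have "\<dots> = ?rhs"
    unfolding L_def K_def A_def dotr_def
    by (intro sum.cong refl) (simp add: sum_distrib_left sum.distrib algebra_simps)
  finally show ?thesis .
qed



lemma sum_split2: fixes n k :: nat shows "(\<Sum>j<n+k. f j) = (\<Sum>j<n. f j) + (\<Sum>j<k. (f (n+j)::'a::comm_monoid_add))"
  by (induction k arbitrary: n) (auto simp: add_ac)

lemma dot_plusv_ofplus: "dotr (2*n) (plusv n z) p = Re (cinner n z (ofplus n p))"
proof -
  have "dotr (2*n) (plusv n z) p = (\<Sum>j<n. Re (z j) * p j) + (\<Sum>j<n. Im (z j) * p (n+j))"
    unfolding dotr_def mult_2 sum_split2 by (simp add: plusv_def)
  also have "\<dots> = Re (cinner n z (ofplus n p))"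
    by (simp add: cinner_def ofplus_def Re_sum sum.distrib[symmetric])
  finally show ?thesis .
qed

lemma ofplus_plusv: "j < n \<Longrightarrow> ofplus n (plusv n x) j = x j"
  by (simp add: ofplus_def plusv_def complex_eq_iff)

lemma cinner_cong2: "(\<And>j. j < n \<Longrightarrow> w j = w' j) \<Longrightarrow> cinner n z w = cinner n z w'"
  unfolding cinner_def by (rule sum.cong) auto

lemma dot_plusv: "dotr (2*n) (plusv n z) (plusv n w) = Re (cinner n z w)"
  by (simp add: dot_plusv_ofplus ofplus_plusv cong: cinner_cong2)

lemma cinner_scal1: "cinner n (\<lambda>j. c * z j) w = c * cinner n z w"
  by (simp add: cinner_def sum_distrib_left mult.assoc)

lemma cinner_scal2: "cinner n z (\<lambda>j. c * w j) = cnj c * cinner n z w"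
  by (simp add: cinner_def sum_distrib_left algebra_simps)

lemma cinner_self: "cinner n z z = complex_of_real ((cnorm n z)\<^sup>2)"
  by (simp add: cinner_def cnorm_def complex_mult_cnj sum_nonneg cmod_power2)

lemma rnorm_plusv: "rnorm (2*n) (plusv n z) = cnorm n z"
proof -
  have "rnorm (2*n) (plusv n z) = sqrt (dotr (2*n) (plusv n z) (plusv n z))"
    by (simp add: rnorm_def dotr_def power2_eq_square)
  also have "\<dots> = sqrt ((cnorm n z)\<^sup>2)" by (simp add: dot_plusv cinner_self)
  also have "\<dots> = cnorm n z" by (simp add: cnorm_def sum_nonneg)
  finally show ?thesis .
qed

lemma floss_repr: "floss n m a xnat p = (\<Sum>i<m. ((dotr (2*n) (plusv n (a i)) p)\<^sup>2
     + (dotr (2*n) (plusv n (\<lambda>j. - \<i> * a i j)) p)\<^sup>2 - (cmod (cinner n (a i) xnat))\<^sup>2)\<^sup>2)"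
proof -
  have "(cmod (cinner n (a i) (ofplus n p)))\<^sup>2 = (dotr (2*n) (plusv n (a i)) p)\<^sup>2
     + (dotr (2*n) (plusv n (\<lambda>j. - \<i> * a i j)) p)\<^sup>2" for i
    by (simp add: dot_plusv_ofplus cinner_scal1[where c="- \<i>", simplified] cmod_power2)
  then show ?thesis unfolding floss_def by simp
qed



lemma sw: "(\<Sum>i\<in>I. \<Sum>j\<in>A. f i j) = (\<Sum>j\<in>A. \<Sum>i\<in>I. f i j)"
  by (rule sum.swap)

lemma swap4: "(\<Sum>i\<in>I. \<Sum>i1\<in>A. \<Sum>i2\<in>B. \<Sum>i3\<in>C. \<Sum>i4\<in>D. (f i i1 i2 i3 i4::real))
   = (\<Sum>i1\<in>A. \<Sum>i2\<in>B. \<Sum>i3\<in>C. \<Sum>i4\<in>D. \<Sum>i\<in>I. f i i1 i2 i3 i4)"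
  by (simp only: sw[of _ I])

lemma prod4: "dotr d b u1 * dotr d b u2 * dotr d b u3 * dotr d b u4 =
  (\<Sum>i1<d. \<Sum>i2<d. \<Sum>i3<d. \<Sum>i4<d. b i1 * b i2 * b i3 * b i4 * u1 i1 * u2 i2 * u3 i3 * u4 i4)"
proof -
  have 1: "dotr d b u1 * dotr d b u2 = (\<Sum>i1<d. \<Sum>i2<d. b i1 * u1 i1 * (b i2 * u2 i2))"
    unfolding dotr_def by (rule sum_product)
  have 2: "dotr d b u1 * dotr d b u2 * dotr d b u3 = (\<Sum>i1<d. \<Sum>i2<d. \<Sum>i3<d. b i1 * u1 i1 * (b i2 * u2 i2) * (b i3 * u3 i3))"
    unfolding 1 by (simp only: dotr_def sum_distrib_right) (simp only: sum_distrib_left)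
  show ?thesis
    unfolding 2 by (simp only: dotr_def sum_distrib_right) (simp only: sum_distrib_left, simp add: ac_simps)
qed

lemma tpair_T: "tpair d (tensorT n m a \<sigma>) u1 u2 u3 u4 = (1 / (real m * \<sigma> ^ 4)) *
   (\<Sum>i<m. dotr d (plusv n (a i)) u1 * dotr d (plusv n (a i)) u2 * dotr d (plusv n (a i)) u3 * dotr d (plusv n (a i)) u4)"
proof -
  define c where "c = 1 / (real m * \<sigma> ^ 4)"
  define F where "F i i1 i2 i3 i4 = plusv n (a i) i1 * plusv n (a i) i2 * plusv n (a i) i3 * plusv n (a i) i4
     * u1 i1 * u2 i2 * u3 i3 * u4 i4" for i i1 i2 i3 i4
  have pt: "tensorT n m a \<sigma> i1 i2 i3 i4 * u1 i1 * u2 i2 * u3 i3 * u4 i4 = c * (\<Sum>i<m. F i i1 i2 i3 i4)"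
    for i1 i2 i3 i4
  proof -
    have "tensorT n m a \<sigma> i1 i2 i3 i4 * u1 i1 * u2 i2 * u3 i3 * u4 i4 =
       c * ((\<Sum>i<m. plusv n (a i) i1 * plusv n (a i) i2 * plusv n (a i) i3 * plusv n (a i) i4) * (u1 i1 * u2 i2 * u3 i3 * u4 i4))"
      unfolding tensorT_def c_def by (simp only: mult.assoc)
    also have "\<dots> = c * (\<Sum>i<m. plusv n (a i) i1 * plusv n (a i) i2 * plusv n (a i) i3 * plusv n (a i) i4 * (u1 i1 * u2 i2 * u3 i3 * u4 i4))"
      by (simp only: sum_distrib_right)
    also have "\<dots> = c * (\<Sum>i<m. F i i1 i2 i3 i4)"
      unfolding F_def by (simp only: mult.assoc)
    finally show ?thesis .
  qed
  have "tpair d (tensorT n m a \<sigma>) u1 u2 u3 u4 = (\<Sum>i1<d. \<Sum>i2<d. \<Sum>i3<d. \<Sum>i4<d. c * (\<Sum>i<m. F i i1 i2 i3 i4))"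
    unfolding tpair_def pt ..
  also have "\<dots> = c * (\<Sum>i1<d. \<Sum>i2<d. \<Sum>i3<d. \<Sum>i4<d. \<Sum>i<m. F i i1 i2 i3 i4)"
    by (simp only: sum_distrib_left)
  also have "\<dots> = c * (\<Sum>i<m. \<Sum>i1<d. \<Sum>i2<d. \<Sum>i3<d. \<Sum>i4<d. F i i1 i2 i3 i4)"
    by (simp only: swap4[where I="{..<m}"])
  also have "\<dots> = c * (\<Sum>i<m. dotr d (plusv n (a i)) u1 * dotr d (plusv n (a i)) u2 * dotr d (plusv n (a i)) u3 * dotr d (plusv n (a i)) u4)"
    unfolding prod4 F_def ..
  finally show ?thesis unfolding c_def .
qed

lemma tpair_diff: "tpair d (\<lambda>i1 i2 i3 i4. R i1 i2 i3 i4 - Q i1 i2 i3 i4) u1 u2 u3 u4 =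
   tpair d R u1 u2 u3 u4 - tpair d Q u1 u2 u3 u4"
  unfolding tpair_def by (simp add: sum_subtractf algebra_simps)


lemma sum_if_const: "(\<Sum>j\<in>S. if P then f j else (0::real)) = (if P then sum f S else 0)" by simp

lemma L1: fixes k d :: nat shows "k < d \<Longrightarrow> (\<Sum>j<d. (if P \<and> k = j then 1 else 0) * a * b * c * (g j::real)) = (if P then a * b * c * g k else 0)"
proof -
  assume k: "k < d"
  have "(\<Sum>j<d. (if P \<and> k = j then 1 else 0) * a * b * c * (g j::real)) = (\<Sum>j<d. if k = j then (if P then a * b * c * g j else 0) else 0)"
    by (rule sum.cong) auto
  also have "\<dots> = (if P then a * b * c * g k else 0)" using k by simp
  finally show ?thesis .
qed

lemma L2: fixes k d :: nat shows "k < d \<Longrightarrow> (\<Sum>j<d. (if k = j \<and> P then 1 else 0) * a * b * c * (g j::real)) = (if P then a * b * c * g k else 0)"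
proof -
  assume k: "k < d"
  have "(\<Sum>j<d. (if k = j \<and> P then 1 else 0) * a * b * c * (g j::real)) = (\<Sum>j<d. if k = j then (if P then a * b * c * g j else 0) else 0)"
    by (rule sum.cong) auto
  also have "\<dots> = (if P then a * b * c * g k else 0)" using k by simp
  finally show ?thesis .
qed

lemma D3: fixes k d :: nat shows "k < d \<Longrightarrow> (\<Sum>j<d. if k = j then f j else (0::real)) = f k" by simp

lemma t1: "tpair d (\<lambda>i1 i2 i3 i4. if i1 = i2 \<and> i3 = i4 then 1 else 0) u1 u2 u3 u4 = dotr d u1 u2 * dotr d u3 u4"
proof -
  have "tpair d (\<lambda>i1 i2 i3 i4. if i1 = i2 \<and> i3 = i4 then 1 else 0) u1 u2 u3 u4 =
     (\<Sum>i1<d. \<Sum>i2<d. \<Sum>i3<d. if i1 = i2 then u1 i1 * u2 i2 * u3 i3 * u4 i3 else 0)"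
    unfolding tpair_def by (intro sum.cong refl) (simp add: L1)
  also have "\<dots> = (\<Sum>i1<d. \<Sum>i2<d. if i1 = i2 then (\<Sum>i3<d. u1 i1 * u2 i2 * u3 i3 * u4 i3) else 0)"
    by (simp only: sum_if_const)
  also have "\<dots> = (\<Sum>i1<d. (\<Sum>i3<d. u1 i1 * u2 i1 * u3 i3 * u4 i3))"
    by (rule sum.cong[OF refl]) (simp add: D3)
  also have "\<dots> = dotr d u1 u2 * dotr d u3 u4"
    unfolding dotr_def sum_product by (simp only: mult.assoc)
  finally show ?thesis .
qed

lemma t2: "tpair d (\<lambda>i1 i2 i3 i4. if i1 = i3 \<and> i2 = i4 then 1 else 0) u1 u2 u3 u4 = dotr d u1 u3 * dotr d u2 u4"
proof -
  have "tpair d (\<lambda>i1 i2 i3 i4. if i1 = i3 \<and> i2 = i4 then 1 else 0) u1 u2 u3 u4 =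
     (\<Sum>i1<d. \<Sum>i2<d. \<Sum>i3<d. if i1 = i3 then u1 i1 * u2 i2 * u3 i3 * u4 i2 else 0)"
    unfolding tpair_def by (intro sum.cong refl) (simp add: L1)
  also have "\<dots> = (\<Sum>i1<d. \<Sum>i2<d. u1 i1 * u2 i2 * u3 i1 * u4 i2)"
    by (intro sum.cong refl) (simp only: D3 lessThan_iff)
  also have "\<dots> = dotr d u1 u3 * dotr d u2 u4"
    unfolding dotr_def sum_product by (intro sum.cong refl) (simp add: ac_simps)
  finally show ?thesis .
qed

lemma t3: "tpair d (\<lambda>i1 i2 i3 i4. if i1 = i4 \<and> i2 = i3 then 1 else 0) u1 u2 u3 u4 = dotr d u1 u4 * dotr d u2 u3"
proof -
  have "tpair d (\<lambda>i1 i2 i3 i4. if i1 = i4 \<and> i2 = i3 then 1 else 0) u1 u2 u3 u4 =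
     (\<Sum>i1<d. \<Sum>i2<d. \<Sum>i3<d. if i2 = i3 then u1 i1 * u2 i2 * u3 i3 * u4 i1 else 0)"
    unfolding tpair_def by (intro sum.cong refl) (simp add: L2)
  also have "\<dots> = (\<Sum>i1<d. \<Sum>i2<d. u1 i1 * u2 i2 * u3 i2 * u4 i1)"
    by (intro sum.cong refl) (simp only: D3 lessThan_iff)
  also have "\<dots> = dotr d u1 u4 * dotr d u2 u3"
    unfolding dotr_def sum_product by (intro sum.cong refl) (simp add: ac_simps)
  finally show ?thesis .
qed


lemma tpair_add: "tpair d (\<lambda>i1 i2 i3 i4. R i1 i2 i3 i4 + Q i1 i2 i3 i4) u1 u2 u3 u4 =
   tpair d R u1 u2 u3 u4 + tpair d Q u1 u2 u3 u4"
  unfolding tpair_def by (simp add: sum.distrib algebra_simps)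

lemma tpair_S: "tpair d tensorS u1 u2 u3 u4 = dotr d u1 u2 * dotr d u3 u4 + dotr d u1 u3 * dotr d u2 u4
   + dotr d u1 u4 * dotr d u2 u3"
proof -
  have e: "tensorS = (\<lambda>i1 i2 i3 i4. ((if i1 = i2 \<and> i3 = i4 then 1 else 0) + (if i1 = i3 \<and> i2 = i4 then 1 else 0))
     + (if i1 = i4 \<and> i2 = i3 then 1 else 0))"
    by (intro ext) (simp add: tensorS_def)
  show ?thesis unfolding e by (simp only: tpair_add t1 t2 t3)
qed

lemma tpair_scale: "tpair d R (\<lambda>j. c1 * u1 j) (\<lambda>j. c2 * u2 j) (\<lambda>j. c3 * u3 j) (\<lambda>j. c4 * u4 j)
   = c1 * c2 * c3 * c4 * tpair d R u1 u2 u3 u4"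
  unfolding tpair_def by (simp add: sum_distrib_left ac_simps)

lemma rnorm_scale: "rnorm d (\<lambda>j. c * u j) = \<bar>c\<bar> * rnorm d u"
  unfolding rnorm_def by (simp add: power_mult_distrib sum_distrib_left[symmetric] real_sqrt_mult)

lemma rnorm_nonneg: "rnorm d u \<ge> 0"
  unfolding rnorm_def by (simp add: sum_nonneg)

lemma comp_le_rnorm: "j < d \<Longrightarrow> \<bar>u j\<bar> \<le> rnorm d u"
proof -
  assume j: "j < d"
  have "(u j)\<^sup>2 \<le> (\<Sum>i<d. (u i)\<^sup>2)"
    using j by (intro member_le_sum) auto
  then have "sqrt ((u j)\<^sup>2) \<le> rnorm d u" unfolding rnorm_def by (rule real_sqrt_le_mono)
  then show ?thesis by simp
qed

lemma tpair_crude: "\<bar>tpair d R u1 u2 u3 u4\<bar> \<le> (\<Sum>i1<d. \<Sum>i2<d. \<Sum>i3<d. \<Sum>i4<d. \<bar>R i1 i2 i3 i4\<bar>)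
      * (rnorm d u1 * rnorm d u2 * rnorm d u3 * rnorm d u4)"
proof -
  let ?P = "rnorm d u1 * rnorm d u2 * rnorm d u3 * rnorm d u4"
  have "\<bar>tpair d R u1 u2 u3 u4\<bar> \<le> (\<Sum>i1<d. \<Sum>i2<d. \<Sum>i3<d. \<Sum>i4<d. \<bar>R i1 i2 i3 i4\<bar> * ?P)"
    unfolding tpair_def
  proof (rule order_trans[OF sum_abs], rule sum_mono, rule order_trans[OF sum_abs], rule sum_mono,
         rule order_trans[OF sum_abs], rule sum_mono, rule order_trans[OF sum_abs], rule sum_mono)
    fix i1 i2 i3 i4 assume "i1 \<in> {..<d}" "i2 \<in> {..<d}" "i3 \<in> {..<d}" "i4 \<in> {..<d}"
    then have "\<bar>u1 i1\<bar> \<le> rnorm d u1" "\<bar>u2 i2\<bar> \<le> rnorm d u2" "\<bar>u3 i3\<bar> \<le> rnorm d u3" "\<bar>u4 i4\<bar> \<le> rnorm d u4"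
      by (auto intro: comp_le_rnorm)
    then have "\<bar>u1 i1\<bar> * \<bar>u2 i2\<bar> * \<bar>u3 i3\<bar> * \<bar>u4 i4\<bar> \<le> ?P"
      by (intro mult_mono) (auto simp: mult_nonneg_nonneg)
    then show "\<bar>R i1 i2 i3 i4 * u1 i1 * u2 i2 * u3 i3 * u4 i4\<bar> \<le> \<bar>R i1 i2 i3 i4\<bar> * ?P"
      by (simp add: abs_mult mult.assoc mult_left_mono)
  qed
  then show ?thesis by (simp add: sum_distrib_right)
qed

lemma tpair_bound:
  assumes op: "opnorm d R < \<delta>"
  shows "\<bar>tpair d R u1 u2 u3 u4\<bar> \<le> \<delta> * (rnorm d u1 * rnorm d u2 * rnorm d u3 * rnorm d u4)"
proof -
  define B where "B = (\<Sum>i1<d. \<Sum>i2<d. \<Sum>i3<d. \<Sum>i4<d. \<bar>R i1 i2 i3 i4\<bar>)"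
  define X where "X = {tpair d R u1 u2 u3 u4 | u1 u2 u3 u4.
       rnorm d u1 * rnorm d u2 * rnorm d u3 * rnorm d u4 = 1}"
  have bdd: "bdd_above X"
  proof (rule bdd_aboveI)
    fix t assume "t \<in> X"
    then obtain w1 w2 w3 w4 where t: "t = tpair d R w1 w2 w3 w4"
      and n: "rnorm d w1 * rnorm d w2 * rnorm d w3 * rnorm d w4 = 1" unfolding X_def by blast
    show "t \<le> B" using tpair_crude[of d R w1 w2 w3 w4] n unfolding t B_def by simp
  qed
  have opX: "opnorm d R = Sup X" unfolding opnorm_def X_def ..
  let ?P = "rnorm d u1 * rnorm d u2 * rnorm d u3 * rnorm d u4"
  have P0: "?P \<ge> 0" by (simp add: rnorm_nonneg)
  show ?thesis
  proof (cases "?P = 0")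
    case True
    then show ?thesis using tpair_crude[of d R u1 u2 u3 u4] by (simp only: True)
  next
    case False
    then have r: "rnorm d u1 > 0" "rnorm d u2 > 0" "rnorm d u3 > 0" "rnorm d u4 > 0"
      using rnorm_nonneg[of d] by (auto simp: order.strict_iff_order)
    define c where "c s = s / ?P" for s
    have mem: "s * tpair d R u1 u2 u3 u4 / ?P \<in> X" if s: "\<bar>s\<bar> = 1" for s
    proof -
      have "tpair d R (\<lambda>j. (s / rnorm d u1) * u1 j) (\<lambda>j. (1 / rnorm d u2) * u2 j)
             (\<lambda>j. (1 / rnorm d u3) * u3 j) (\<lambda>j. (1 / rnorm d u4) * u4 j) = s * tpair d R u1 u2 u3 u4 / ?P"
        using r by (simp only: tpair_scale) (simp add: divide_simps)
      moreover have "rnorm d (\<lambda>j. (s / rnorm d u1) * u1 j) * rnorm d (\<lambda>j. (1 / rnorm d u2) * u2 j)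
          * rnorm d (\<lambda>j. (1 / rnorm d u3) * u3 j) * rnorm d (\<lambda>j. (1 / rnorm d u4) * u4 j) = 1"
        using r s by (simp only: rnorm_scale) (simp add: abs_divide field_simps)
      ultimately show ?thesis unfolding X_def by (smt (verit, ccfv_threshold) mem_Collect_eq)
    qed
    have "1 * tpair d R u1 u2 u3 u4 / ?P \<le> opnorm d R" unfolding opX
      by (rule cSup_upper[OF mem bdd]) simp
    moreover have "(-1) * tpair d R u1 u2 u3 u4 / ?P \<le> opnorm d R" unfolding opX
      by (rule cSup_upper[OF mem bdd]) simp
    ultimately have "\<bar>tpair d R u1 u2 u3 u4\<bar> / ?P \<le> opnorm d R" by (simp add: abs_if)
    then have "\<bar>tpair d R u1 u2 u3 u4\<bar> \<le> opnorm d R * ?P" using P0 False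
      by (simp add: divide_le_eq)
    also have "\<dots> \<le> \<delta> * ?P" using op P0 by (intro mult_right_mono) auto
    finally show ?thesis .
  qed
qed



lemma dotr_comm: "dotr d u w = dotr d w u"
  unfolding dotr_def by (simp add: mult.commute)

lemma kappa_eq: "dotr (2*n) (plusv n (\<lambda>j. - (\<i> * a j))) (plusv n z) = dotr (2*n) (plusv n a) (plusv n (\<lambda>j. \<i> * z j))"
  by (simp add: dot_plusv cinner_scal1[where c="- \<i>", simplified] cinner_scal2)

lemma cnorm_i: "cnorm n (\<lambda>j. \<i> * z j) = cnorm n z"
  by (simp add: cnorm_def norm_mult)

lemma cmod_sq_dot: "(cmod (cinner n a z))\<^sup>2 = (dotr (2*n) (plusv n a) (plusv n z))\<^sup>2
   + (dotr (2*n) (plusv n a) (plusv n (\<lambda>j. \<i> * z j)))\<^sup>2"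
  by (simp add: dot_plusv cinner_scal2 cmod_power2)

lemma dots:
  fixes x v :: "nat \<Rightarrow> complex" and n :: nat
  defines "P \<equiv> plusv n x" and "P' \<equiv> plusv n (\<lambda>j. \<i> * x j)"
    and "V \<equiv> plusv n v" and "V' \<equiv> plusv n (\<lambda>j. \<i> * v j)"
  shows "dotr (2*n) P P = (cnorm n x)\<^sup>2" "dotr (2*n) P' P' = (cnorm n x)\<^sup>2" "dotr (2*n) P P' = 0"
    "dotr (2*n) V V = (cnorm n v)\<^sup>2" "dotr (2*n) V' V' = (cnorm n v)\<^sup>2" "dotr (2*n) V V' = 0"
    "dotr (2*n) P V = Re (cinner n x v)" "dotr (2*n) P' V' = Re (cinner n x v)"
    "dotr (2*n) P V' = Im (cinner n x v)" "dotr (2*n) P' V = - Im (cinner n x v)"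
  unfolding P_def P'_def V_def V'_def
  by (simp_all add: dot_plusv cinner_scal1 cinner_scal2 cinner_self)



theorem proposition6:
  shows "\<exists>C2>0. \<forall>(n::nat) (m::nat) (a::nat \<Rightarrow> nat \<Rightarrow> complex) (xnat::nat \<Rightarrow> complex)
      (\<sigma>::real) (\<delta>0::real) (x::nat \<Rightarrow> complex).
      n \<ge> 1 \<and> m \<ge> 1 \<and> cnorm n xnat \<noteq> 0 \<and> \<sigma> > 0 \<and> \<delta>0 > 0 \<and>
      opnorm (2*n) (\<lambda>i1 i2 i3 i4. tensorT n m a \<sigma> i1 i2 i3 i4 - tensorS i1 i2 i3 i4) < \<delta>0 \<and>
      8 * (cmod (cinner n x xnat))\<^sup>2 / (cnorm n xnat) ^ 4
        + (4 + \<delta>0 * C2 / 4) * (cnorm n x)\<^sup>2 / (cnorm n xnat)\<^sup>2 \<le> 4 - \<delta>0 * C2 / 4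
      \<longrightarrow> hess_form (2*n) (floss n m a xnat) (plusv n x) (plusv n xnat) < 0"
proof (intro exI[of _ 25] conjI allI impI)
  fix n m :: nat and a :: "nat \<Rightarrow> nat \<Rightarrow> complex" and v x :: "nat \<Rightarrow> complex" and \<sigma> \<delta> :: real
  assume H: "1 \<le> n \<and> 1 \<le> m \<and> cnorm n v \<noteq> 0 \<and> 0 < \<sigma> \<and> 0 < \<delta> \<and>
       opnorm (2 * n) (\<lambda>i1 i2 i3 i4. tensorT n m a \<sigma> i1 i2 i3 i4 - tensorS i1 i2 i3 i4) < \<delta> \<and>
       8 * (cmod (cinner n x v))\<^sup>2 / cnorm n v ^ 4 + (4 + \<delta> * 25 / 4) * (cnorm n x)\<^sup>2 / (cnorm n v)\<^sup>2
       \<le> 4 - \<delta> * 25 / 4"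
  define d where "d = 2 * n"
  define E where "E = (\<lambda>i1 i2 i3 i4. tensorT n m a \<sigma> i1 i2 i3 i4 - tensorS i1 i2 i3 i4)"
  define c where "c = real m * \<sigma> ^ 4"
  define P where "P = plusv n x"
  define P' where "P' = plusv n (\<lambda>j. \<i> * x j)"
  define V where "V = plusv n v"
  define V' where "V' = plusv n (\<lambda>j. \<i> * v j)"
  define b where "b i = plusv n (a i)" for i
  define \<Phi> where "\<Phi> u1 u2 u3 u4 = (\<Sum>i<m. dotr d (b i) u1 * dotr d (b i) u2 * dotr d (b i) u3 * dotr d (b i) u4)" for u1 u2 u3 u4
  define r where "r = cnorm n x"
  define s where "s = cnorm n v"
  define \<alpha> where "\<alpha> = Re (cinner n x v)"
  define \<beta> where "\<beta> = Im (cinner n x v)"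
  define cm where "cm = cmod (cinner n x v)"
  have op: "opnorm d E < \<delta>" using H unfolding d_def E_def by simp
  have \<delta>0: "\<delta> > 0" using H by simp
  have c0: "c > 0" unfolding c_def using H by simp
  have s0: "s > 0"
  proof -
    have "s \<ge> 0" unfolding s_def cnorm_def by (simp add: sum_nonneg)
    moreover have "s \<noteq> 0" using H unfolding s_def by simp
    ultimately show ?thesis by simp
  qed
  have r0: "r \<ge> 0" unfolding r_def by (simp add: cnorm_def sum_nonneg)
  have hyp: "8 * cm\<^sup>2 / s ^ 4 + (4 + \<delta> * 25 / 4) * r\<^sup>2 / s\<^sup>2 \<le> 4 - \<delta> * 25 / 4"
    using H unfolding cm_def s_def r_def by simp
  have hess: "hess_form d (floss n m a v) P V = (\<Sum>i<m.
      8 * (dotr d (b i) P * dotr d (b i) V + dotr d (b i) P' * dotr d (b i) V')\<^sup>2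
      + 4 * ((dotr d (b i) P)\<^sup>2 + (dotr d (b i) P')\<^sup>2 - ((dotr d (b i) V)\<^sup>2 + (dotr d (b i) V')\<^sup>2))
          * ((dotr d (b i) V)\<^sup>2 + (dotr d (b i) V')\<^sup>2))"
    unfolding hess_form_generic[OF floss_repr[of n m a v]] d_def P_def V_def P'_def V'_def b_def
    by (simp add: kappa_eq cmod_sq_dot)
  have \<Phi>_eq: "\<Phi> u1 u2 u3 u4 = c * (tpair d tensorS u1 u2 u3 u4 + tpair d E u1 u2 u3 u4)" for u1 u2 u3 u4
    using c0 H unfolding \<Phi>_def E_def tpair_diff tpair_T c_def b_def by simp
  have comb: "hess_form d (floss n m a v) P V = 12 * \<Phi> P P V V + 16 * \<Phi> P V P' V' + 12 * \<Phi> P' P' V' V'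
     + 4 * \<Phi> P P V' V' + 4 * \<Phi> P' P' V V - 4 * \<Phi> V V V V - 8 * \<Phi> V V V' V' - 4 * \<Phi> V' V' V' V'"
    unfolding hess \<Phi>_def
    by (simp add: sum_distrib_left sum.distrib[symmetric] sum_subtractf[symmetric])
       (intro sum.cong refl; simp add: power2_eq_square algebra_simps)
  note dts0 = dots(1-3)[where x=x and n=n] dots(4-6)[where v=v and n=n] dots(7-10)[where x=x and v=v and n=n]
  note dts = dts0[folded P_def P'_def V_def V'_def d_def r_def s_def \<alpha>_def \<beta>_def]
  have dVP': "dotr d V P' = - \<beta>" using dts by (simp add: dotr_comm[of d V P'])
  have rn: "rnorm d P = r" "rnorm d P' = r" "rnorm d V = s" "rnorm d V' = s"
    unfolding P_def P'_def V_def V'_def d_def r_def s_def by (simp_all add: rnorm_plusv cnorm_i)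
  define e1 where "e1 = tpair d E P P V V"
  define e2 where "e2 = tpair d E P V P' V'"
  define e3 where "e3 = tpair d E P' P' V' V'"
  define e4 where "e4 = tpair d E P P V' V'"
  define e5 where "e5 = tpair d E P' P' V V"
  define e6 where "e6 = tpair d E V V V V"
  define e7 where "e7 = tpair d E V V V' V'"
  define e8 where "e8 = tpair d E V' V' V' V'"
  define X where "X = r\<^sup>2 * s\<^sup>2"
  define Y where "Y = s ^ 4"
  define DX where "DX = \<delta> * X"
  define DY where "DY = \<delta> * Y"
  have bX: "\<bar>tpair d E u1 u2 u3 u4\<bar> \<le> DX" if "rnorm d u1 * rnorm d u2 * rnorm d u3 * rnorm d u4 = r * r * s * s"
    for u1 u2 u3 u4
    using tpair_bound[OF op, of u1 u2 u3 u4] that unfolding DX_def X_def by (simp add: power2_eq_square mult.assoc)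
  have bY: "\<bar>tpair d E u1 u2 u3 u4\<bar> \<le> DY" if "rnorm d u1 * rnorm d u2 * rnorm d u3 * rnorm d u4 = s * s * s * s"
    for u1 u2 u3 u4
    using tpair_bound[OF op, of u1 u2 u3 u4] that unfolding DY_def Y_def by (simp add: power4_eq_xxxx mult.assoc)
  have eb: "\<bar>e1\<bar> \<le> DX" "\<bar>e2\<bar> \<le> DX" "\<bar>e3\<bar> \<le> DX" "\<bar>e4\<bar> \<le> DX" "\<bar>e5\<bar> \<le> DX"
     "\<bar>e6\<bar> \<le> DY" "\<bar>e7\<bar> \<le> DY" "\<bar>e8\<bar> \<le> DY"
    unfolding e1_def e2_def e3_def e4_def e5_def e6_def e7_def e8_def
    by (rule bX bY; simp add: rn ac_simps)+
  have Z: "hess_form d (floss n m a v) P V = c * (32 * X + 64 * \<alpha>\<^sup>2 - 32 * Y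
      + (12 * e1 + 16 * e2 + 12 * e3 + 4 * e4 + 4 * e5 - 4 * e6 - 8 * e7 - 4 * e8))"
    unfolding comb \<Phi>_eq tpair_S dts dVP' e1_def[symmetric] e2_def[symmetric] e3_def[symmetric]
      e4_def[symmetric] e5_def[symmetric] e6_def[symmetric] e7_def[symmetric] e8_def[symmetric] X_def Y_def
    by (simp add: algebra_simps power2_eq_square power4_eq_xxxx)
  have cm2: "cm\<^sup>2 = \<alpha>\<^sup>2 + \<beta>\<^sup>2" unfolding cm_def \<alpha>_def \<beta>_def by (simp add: cmod_power2)
  have hyp2: "8 * cm\<^sup>2 + 4 * X + 25/4 * DX \<le> 4 * Y - 25/4 * DY"
  proof -
    have "(8 * cm\<^sup>2 / s ^ 4 + (4 + \<delta> * 25 / 4) * r\<^sup>2 / s\<^sup>2) * s ^ 4 \<le> (4 - \<delta> * 25 / 4) * s ^ 4"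
      using hyp s0 by (intro mult_right_mono) auto
    moreover have "8 * cm\<^sup>2 / s ^ 4 * s ^ 4 = 8 * cm\<^sup>2" using s0 by simp
    moreover have "(4 + \<delta> * 25 / 4) * r\<^sup>2 / s\<^sup>2 * s ^ 4 = 4 * X + 25/4 * DX"
      using s0 unfolding X_def DX_def by (simp add: field_simps power2_eq_square power4_eq_xxxx)
    moreover have "(4 - \<delta> * 25 / 4) * s ^ 4 = 4 * Y - 25/4 * DY"
      unfolding Y_def DY_def by (simp add: algebra_simps)
    ultimately show ?thesis by (simp only: distrib_right)

  qed
  have DY0: "DY > 0" unfolding DY_def Y_def using \<delta>0 s0 by simp
  have DX0: "DX \<ge> 0" unfolding DX_def X_def using \<delta>0 by simp
  have b2: "\<beta>\<^sup>2 \<ge> 0" by simp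
  have "32 * X + 64 * \<alpha>\<^sup>2 - 32 * Y
      + (12 * e1 + 16 * e2 + 12 * e3 + 4 * e4 + 4 * e5 - 4 * e6 - 8 * e7 - 4 * e8) < 0"
    using eb[unfolded abs_le_iff] hyp2 cm2 DY0 DX0 b2 by linarith
  then have "hess_form d (floss n m a v) P V < 0" unfolding Z using c0 by (simp add: mult_pos_neg)
  then show "hess_form (2*n) (floss n m a v) (plusv n x) (plusv n v) < 0"
    unfolding d_def P_def V_def .
qed simp


end
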